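(* For any complex numbers $a,b,\alpha,\beta,\theta$ with $\beta a-\alpha b\neq0$, any natural number $n\ge1$, and any integer $k\ge0$ (with $k\le\lfloor n/2\rfloor$ in the first identity and $k\le\lfloor (n-1)/2\rfloor$ in the second), \[ \sum_{r=k}^{\lfloor n/2\rfloor}\binom{r}{k}\Psi\left(\begin{array}{cc|c} a & b & n \\ \alpha & \beta & r \end{array}\right)\theta^{r-k}=\Psi\left(\begin{array}{cc|c} a-\alpha\theta & b-\beta\theta & n \\ \alpha & \beta & k \end{array}\right), \] \[ \sum_{r=k}^{\lfloor (n-1)/2\rfloor}\binom{r}{k}\Phi\left(\begin{array}{cc|c} a & b & n \\ \alpha & \beta & r \end{array}\right)\theta^{r-k}=\Phi\left(\begin{array}{cc|c} a-\alpha\theta & b-\beta\theta & n \\ \alpha & \beta & k \end{array}\right). \]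
   Context: $\delta(m)=1$ for $m$ odd, $0$ for $m$ even; $\lfloor\cdot\rfloor$ is the floor. For indeterminates $a,b,\alpha,\beta$ and $n\ge1$, $\Psi\left(\begin{array}{cc|c} a & b & n \\ \alpha & \beta & r \end{array}\right)$ ($0\le r\le\lfloor n/2\rfloor$) and $\Phi\left(\begin{array}{cc|c} a & b & n \\ \alpha & \beta & r \end{array}\right)$ ($0\le r\le\lfloor (n-1)/2\rfloor$) are the unique polynomials in $\mathbb{Z}[a,b,\alpha,\beta]$ such that, identically in $x,y$, $(\beta a-\alpha b)^{\lfloor n/2\rfloor}\frac{x^n+y^n}{(x+y)^{\delta(n)}}=\sum_{r}\Psi\left(\begin{array}{cc|c} a & b & n \\ \alpha & \beta & r \end{array}\right)(\alpha x^2+\beta xy+\alpha y^2)^{\lfloor n/2\rfloor-r}(ax^2+bxy+ay^2)^r$ and $(\beta a-\alpha b)^{\lfloor (n-1)/2\rfloor}\frac{x^n-y^n}{(x-y)(x+y)^{\delta(n-1)}}=\sum_{r}\Phi\left(\begin{array}{cc|c} a & b & n \\ \alpha & \beta & r \end{array}\right)(\alpha x^2+\beta xy+\alpha y^2)^{\lfloor (n-1)/2\rfloor-r}(ax^2+bxy+ay^2)^r$; for numerical arguments these polynomials are evaluated. *)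

theory Defs
  imports Complex_Main
begin

definition delta :: "nat \<Rightarrow> nat" where
  "delta m = (if odd m then 1 else 0)"

text \<open>Coefficient sequences (indexed by r, zero beyond the top index) realising the
  defining identities; the division by (x+y)^delta resp. (x-y)(x+y)^delta is
  cleared by multiplying through (equivalent as polynomial identities).\<close>

definition Psi :: "complex \<Rightarrow> complex \<Rightarrow> complex \<Rightarrow> complex \<Rightarrow> nat \<Rightarrow> nat \<Rightarrow> complex" where
  "Psi a b \<alpha> \<beta> n = (THE c. (\<forall>r > n div 2. c r = 0) \<and>
     (\<forall>x y :: complex. (\<beta>*a - \<alpha>*b) ^ (n div 2) * (x ^ n + y ^ n) =
        (x + y) ^ delta n * (\<Sum>r = 0..n div 2. c r * (\<alpha>*x^2 + \<beta>*x*y + \<alpha>*y^2) ^ (n div 2 - r)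
                                             * (a*x^2 + b*x*y + a*y^2) ^ r)))"

definition Phi :: "complex \<Rightarrow> complex \<Rightarrow> complex \<Rightarrow> complex \<Rightarrow> nat \<Rightarrow> nat \<Rightarrow> complex" where
  "Phi a b \<alpha> \<beta> n = (THE c. (\<forall>r > (n - 1) div 2. c r = 0) \<and>
     (\<forall>x y :: complex. (\<beta>*a - \<alpha>*b) ^ ((n - 1) div 2) * (x ^ n - y ^ n) =
        (x - y) * (x + y) ^ delta (n - 1) *
          (\<Sum>r = 0..(n - 1) div 2. c r * (\<alpha>*x^2 + \<beta>*x*y + \<alpha>*y^2) ^ ((n - 1) div 2 - r)
                                      * (a*x^2 + b*x*y + a*y^2) ^ r)))"

end

theory Submission
  imports Defs
begin


definition hsum :: "(nat \<Rightarrow> complex) \<Rightarrow> nat \<Rightarrow> complex \<Rightarrow> complex \<Rightarrow> complex" where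
  "hsum c m q p = (\<Sum>r = 0..m. c r * q ^ (m - r) * p ^ r)"

definition rep :: "complex \<Rightarrow> complex \<Rightarrow> complex \<Rightarrow> complex \<Rightarrow> nat \<Rightarrow> (complex \<Rightarrow> complex \<Rightarrow> complex) \<Rightarrow> bool" where
  "rep a b \<alpha> \<beta> m f \<longleftrightarrow> (\<exists>c. (\<forall>r>m. c r = 0) \<and>
     (\<forall>x y. f x y = hsum c m (\<alpha>*x^2 + \<beta>*x*y + \<alpha>*y^2) (a*x^2 + b*x*y + a*y^2)))"

lemma hsum_Q:
  assumes "c (Suc m) = 0"
  shows "hsum c (Suc m) q p = q * hsum c m q p"
proof -
  have "hsum c (Suc m) q p = (\<Sum>r = 0..m. c r * q ^ (Suc m - r) * p ^ r)"
    unfolding hsum_def using assms by (simp add: sum.atLeast0_atMost_Suc)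
  also have "\<dots> = (\<Sum>r = 0..m. q * (c r * q ^ (m - r) * p ^ r))"
    by (rule sum.cong) (auto simp: Suc_diff_le)
  finally show ?thesis by (simp add: hsum_def sum_distrib_left)
qed

lemma hsum_P:
  "hsum (\<lambda>r. if r = 0 then 0 else c (r - 1)) (Suc m) q p = p * hsum c m q p"
  unfolding hsum_def
  by (subst sum.atLeast0_atMost_Suc_shift) (simp add: sum_distrib_left mult_ac del: sum.atLeast0_atMost_Suc)

lemma hsum_lin:
  "hsum (\<lambda>r. s * c r + t * d r) m q p = s * hsum c m q p + t * hsum d m q p"
  unfolding hsum_def
  by (simp add: sum.distrib sum_distrib_left algebra_simps)

lemma rep_Q:
  assumes "rep a b \<alpha> \<beta> m f"
  shows "rep a b \<alpha> \<beta> (Suc m) (\<lambda>x y. (\<alpha>*x^2 + \<beta>*x*y + \<alpha>*y^2) * f x y)"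
  using assms unfolding rep_def
  by (metis Suc_n_not_le_n hsum_Q le_eq_less_or_eq less_Suc_eq not_less_eq)

lemma rep_P:
  assumes "rep a b \<alpha> \<beta> m f"
  shows "rep a b \<alpha> \<beta> (Suc m) (\<lambda>x y. (a*x^2 + b*x*y + a*y^2) * f x y)"
proof -
  from assms obtain c where c: "\<forall>r>m. c r = 0"
    "\<forall>x y. f x y = hsum c m (\<alpha>*x^2 + \<beta>*x*y + \<alpha>*y^2) (a*x^2 + b*x*y + a*y^2)"
    unfolding rep_def by blast
  show ?thesis unfolding rep_def
    apply (rule exI[of _ "\<lambda>r. if r = 0 then 0 else c (r - 1)"])
    using c by (auto simp: hsum_P)
qed

lemma rep_lin:
  assumes "rep a b \<alpha> \<beta> m f" "rep a b \<alpha> \<beta> m g"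
  shows "rep a b \<alpha> \<beta> m (\<lambda>x y. s * f x y + t * g x y)"
proof -
  from assms obtain c d where c: "\<forall>r>m. c r = 0"
    "\<forall>x y. f x y = hsum c m (\<alpha>*x^2 + \<beta>*x*y + \<alpha>*y^2) (a*x^2 + b*x*y + a*y^2)"
    and d: "\<forall>r>m. d r = 0"
    "\<forall>x y. g x y = hsum d m (\<alpha>*x^2 + \<beta>*x*y + \<alpha>*y^2) (a*x^2 + b*x*y + a*y^2)"
    unfolding rep_def by blast
  show ?thesis unfolding rep_def
    apply (rule exI[of _ "\<lambda>r. s * c r + t * d r"])
    using c d by (auto simp: hsum_lin)
qed

lemma rep_ext: "rep a b \<alpha> \<beta> m f \<Longrightarrow> (\<And>x y. f x y = g x y) \<Longrightarrow> rep a b \<alpha> \<beta> m g"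
  unfolding rep_def by simp

lemma rep_const: "rep a b \<alpha> \<beta> 0 (\<lambda>x y. g0)"
  unfolding rep_def hsum_def
  by (rule exI[of _ "\<lambda>r. if r = 0 then g0 else 0"]) auto

lemma rep_u:
  assumes "rep a b \<alpha> \<beta> m f"
  shows "rep a b \<alpha> \<beta> (Suc m) (\<lambda>x y. (\<beta>*a - \<alpha>*b) * (x^2 + y^2) * f x y)"
proof -
  have "rep a b \<alpha> \<beta> (Suc m) (\<lambda>x y. \<beta> * ((a*x^2 + b*x*y + a*y^2) * f x y)
      + (-b) * ((\<alpha>*x^2 + \<beta>*x*y + \<alpha>*y^2) * f x y))"
    by (rule rep_lin[OF rep_P[OF assms] rep_Q[OF assms]])
  then show ?thesis by (rule rep_ext) (simp add: algebra_simps)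
qed

lemma rep_v:
  assumes "rep a b \<alpha> \<beta> m f"
  shows "rep a b \<alpha> \<beta> (Suc m) (\<lambda>x y. (\<beta>*a - \<alpha>*b) * (x * y) * f x y)"
proof -
  have "rep a b \<alpha> \<beta> (Suc m) (\<lambda>x y. a * ((\<alpha>*x^2 + \<beta>*x*y + \<alpha>*y^2) * f x y)
      + (-\<alpha>) * ((a*x^2 + b*x*y + a*y^2) * f x y))"
    by (rule rep_lin[OF rep_Q[OF assms] rep_P[OF assms]])
  then show ?thesis by (rule rep_ext) (simp add: algebra_simps power2_eq_square)
qed

fun Grec :: "complex \<Rightarrow> complex \<Rightarrow> complex \<Rightarrow> complex \<Rightarrow> complex \<Rightarrow> nat \<Rightarrow> complex" where
  "Grec g0 s t x y 0 = g0"
| "Grec g0 s t x y (Suc 0) = s * (x^2 + y^2) + t * (x * y)"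
| "Grec g0 s t x y (Suc (Suc m)) = (x^2 + y^2) * Grec g0 s t x y (Suc m) - (x*y)^2 * Grec g0 s t x y m"

lemma rep_Grec: "rep a b \<alpha> \<beta> m (\<lambda>x y. (\<beta>*a - \<alpha>*b)^m * Grec g0 s t x y m)"
proof (induction m rule: Grec.induct[where P = "\<lambda>g0 s t x y m. rep a b \<alpha> \<beta> m (\<lambda>x y. (\<beta>*a - \<alpha>*b)^m * Grec g0 s t x y m)"])
  case (1 g0 s t x y)
  then show ?case using rep_const[of a b \<alpha> \<beta> g0] by simp
next
  case (2 g0 s t x y)
  have "rep a b \<alpha> \<beta> (Suc 0) (\<lambda>x y. s * ((\<beta>*a - \<alpha>*b) * (x^2 + y^2) * 1)
      + t * ((\<beta>*a - \<alpha>*b) * (x * y) * 1))"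
    by (rule rep_lin[OF rep_u rep_v]; rule rep_const)
  then show ?case by (rule rep_ext) (simp add: algebra_simps)
next
  case (3 g0 s t x y m)
  have "rep a b \<alpha> \<beta> (Suc (Suc m)) (\<lambda>x y. 1 * ((\<beta>*a - \<alpha>*b) * (x^2 + y^2) * ((\<beta>*a - \<alpha>*b)^(Suc m) * Grec g0 s t x y (Suc m)))
      + (-1) * ((\<beta>*a - \<alpha>*b) * (x * y) * ((\<beta>*a - \<alpha>*b) * (x * y) * ((\<beta>*a - \<alpha>*b)^m * Grec g0 s t x y m))))"
    by (rule rep_lin[OF rep_u[OF 3(1)] rep_v[OF rep_v[OF 3(2)]]])
  then show ?case by (rule rep_ext) (simp add: algebra_simps power2_eq_square)
qed



lemma rec_uniq:
  fixes F H :: "nat \<Rightarrow> complex"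
  assumes "F 0 = H 0" "F 1 = H 1"
    "\<And>j. F (Suc (Suc j)) = u * F (Suc j) - v * F j"
    "\<And>j. H (Suc (Suc j)) = u * H (Suc j) - v * H j"
  shows "F m = H m"
proof -
  have "F m = H m \<and> F (Suc m) = H (Suc m)"
    by (induction m) (use assms in auto)
  then show ?thesis by simp
qed

lemma G1: "x^(2*m) + y^(2*m) = Grec 2 1 0 x y m"
  by (rule rec_uniq[where u = "x^2+y^2" and v = "(x*y)^2"])
     (auto simp: algebra_simps power_add power_mult_distrib power2_eq_square power_mult)

lemma G2: "x^(2*m+1) + y^(2*m+1) = (x+y) * Grec 1 1 (-1) x y m"
  by (rule rec_uniq[where u = "x^2+y^2" and v = "(x*y)^2"])
     (auto simp: algebra_simps power_add power_mult_distrib power2_eq_square power_mult)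

lemma G3: "x^(2*m+1) - y^(2*m+1) = (x-y) * Grec 1 1 1 x y m"
  by (rule rec_uniq[where u = "x^2+y^2" and v = "(x*y)^2"])
     (auto simp: algebra_simps power_add power_mult_distrib power2_eq_square power_mult)

lemma G4: "x^(2*m+2) - y^(2*m+2) = (x-y) * (x+y) * Grec 1 1 0 x y m"
  by (rule rec_uniq[where u = "x^2+y^2" and v = "(x*y)^2"])
     (auto simp: algebra_simps power_add power_mult_distrib power2_eq_square power_mult)



lemma finite_lin: "\<not> (A = 0 \<and> B = 0) \<Longrightarrow> finite {p::complex. A * p = B}"
proof -
  assume h: "\<not> (A = 0 \<and> B = 0)"
  show ?thesis
  proof (cases "A = 0")
    case True then show ?thesis using h by simp
  next
    case False
    then have "{p::complex. A * p = B} \<subseteq> {B / A}" by (auto simp: field_simps)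
    then show ?thesis by (rule finite_subset) simp
  qed
qed

lemma uniq0:
  assumes D: "\<beta>*a - \<alpha>*b \<noteq> 0"
    and z: "\<forall>x y. x + y \<noteq> 0 \<longrightarrow> x - y \<noteq> 0 \<longrightarrow>
              hsum d m (\<alpha>*x^2 + \<beta>*x*y + \<alpha>*y^2) (a*x^2 + b*x*y + a*y^2) = 0"
    and d: "\<forall>r>m. d r = 0"
  shows "d = (\<lambda>_. 0)"
proof -
  define D where "D = \<beta>*a - \<alpha>*b"
  have DD: "D \<noteq> 0" using D D_def by simp
  have key: "(\<Sum>r\<le>m. d r * p^r) = 0"
    if h1: "(\<beta> - 2*\<alpha>) * p \<noteq> b - 2*a" and h2: "(\<beta> + 2*\<alpha>) * p \<noteq> b + 2*a" for p
  proof -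
    define u where "u = (\<beta>*p - b)/D"
    define v where "v = (a - \<alpha>*p)/D"
    have "\<alpha>*u + \<beta>*v = (\<alpha>*(\<beta>*p - b) + \<beta>*(a - \<alpha>*p))/D" unfolding u_def v_def
      by (simp add: add_divide_distrib)
    also have "\<dots> = D/D" by (simp add: D_def algebra_simps)
    finally have q1: "\<alpha>*u + \<beta>*v = 1" using DD by simp
    have "a*u + b*v = (a*(\<beta>*p - b) + b*(a - \<alpha>*p))/D" unfolding u_def v_def
      by (simp add: add_divide_distrib)
    also have "\<dots> = (D*p)/D" by (simp add: D_def algebra_simps)
    finally have p1: "a*u + b*v = p" using DD by simp
    have "u + 2*v = ((\<beta> - 2*\<alpha>) * p - (b - 2*a))/D" unfolding u_def v_def using DD
      by (simp add: field_simps)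
    moreover have "(\<beta> - 2*\<alpha>) * p - (b - 2*a) \<noteq> 0" using h1 by simp
    ultimately have n1: "u + 2*v \<noteq> 0" using DD by simp
    have "u - 2*v = ((\<beta> + 2*\<alpha>) * p - (b + 2*a))/D" unfolding u_def v_def using DD
      by (simp add: field_simps)
    moreover have "(\<beta> + 2*\<alpha>) * p - (b + 2*a) \<noteq> 0" using h2 by simp
    ultimately have n2: "u - 2*v \<noteq> 0" using DD by simp
    define e where "e = csqrt (u + 2*v)"
    define w where "w = csqrt (u - 2*v)"
    define x where "x = (e + w)/2"
    define y where "y = (e - w)/2"
    have e2: "e^2 = u + 2*v" unfolding e_def by simp
    have w2: "w^2 = u - 2*v" unfolding w_def by simp
    have xy1: "x + y = e" unfolding x_def y_def by (simp add: field_simps)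
    have xy2: "x - y = w" unfolding x_def y_def by (simp add: field_simps)
    have ne: "e \<noteq> 0" unfolding e_def using n1 by simp
    have nw: "w \<noteq> 0" unfolding w_def using n2 by simp
    have su: "x^2 + y^2 = u"
    proof -
      have "x^2 + y^2 = (e^2 + w^2)/2" unfolding x_def y_def by (simp add: field_simps power2_eq_square)
      then show ?thesis using e2 w2 by simp
    qed
    have sv: "x * y = v"
    proof -
      have "x * y = (e^2 - w^2)/4" unfolding x_def y_def by (simp add: field_simps power2_eq_square)
      then show ?thesis using e2 w2 by simp
    qed
    have Q1: "\<alpha>*x^2 + \<beta>*x*y + \<alpha>*y^2 = 1"
    proof -
      have "\<alpha>*x^2 + \<beta>*x*y + \<alpha>*y^2 = \<alpha>*(x^2+y^2) + \<beta>*(x*y)" by (simp add: algebra_simps)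
      then show ?thesis using su sv q1 by simp
    qed
    have P1: "a*x^2 + b*x*y + a*y^2 = p"
    proof -
      have "a*x^2 + b*x*y + a*y^2 = a*(x^2+y^2) + b*(x*y)" by (simp add: algebra_simps)
      then show ?thesis using su sv p1 by simp
    qed
    have "hsum d m 1 p = 0" using z[rule_format, of x y] xy1 xy2 ne nw Q1 P1 by simp
    then show ?thesis unfolding hsum_def by (simp add: atLeast0AtMost)
  qed
  have f1: "finite {p::complex. (\<beta> - 2*\<alpha>) * p = b - 2*a}"
  proof (rule finite_lin, rule notI)
    assume "\<beta> - 2*\<alpha> = 0 \<and> b - 2*a = 0"
    then have "\<beta> = 2*\<alpha>" "b = 2*a" by auto
    then show False using D by simp
  qed
  have f2: "finite {p::complex. (\<beta> + 2*\<alpha>) * p = b + 2*a}"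
  proof (rule finite_lin, rule notI)
    assume "\<beta> + 2*\<alpha> = 0 \<and> b + 2*a = 0"
    then have "\<beta> = -2*\<alpha>" "b = -2*a" by (auto simp: algebra_simps eq_neg_iff_add_eq_0)
    then show False using D by simp
  qed
  have sub: "UNIV \<subseteq> {p. (\<Sum>r\<le>m. d r * p^r) = 0} \<union> {p::complex. (\<beta> - 2*\<alpha>) * p = b - 2*a}
     \<union> {p::complex. (\<beta> + 2*\<alpha>) * p = b + 2*a}"
    using key by blast
  have "\<not> finite {p::complex. (\<Sum>r\<le>m. d r * p^r) = 0}"
  proof
    assume "finite {p::complex. (\<Sum>r\<le>m. d r * p^r) = 0}"
    then have "finite (UNIV :: complex set)" using f1 f2 sub by (meson finite_UnI finite_subset)
    then show False by (simp add: infinite_UNIV_char_0)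
  qed
  then have "\<forall>i\<le>m. d i = 0" using polyfun_finite_roots[of d m] by blast
  then show ?thesis using d by (metis not_le)
qed



lemma hsum_shift:
  "hsum c m q (p' + \<theta>*q) =
   hsum (\<lambda>k. if k \<le> m then (\<Sum>r = k..m. of_nat (r choose k) * c r * \<theta> ^ (r - k)) else 0) m q p'"
proof -
  define f where "f r k = of_nat (r choose k) * c r * \<theta> ^ (r - k) * q ^ (m - k) * p' ^ k" for r k
  have "hsum c m q (p' + \<theta>*q) = (\<Sum>r\<in>{0..m}. \<Sum>k\<in>{k. k \<in> {0..m} \<and> k \<le> r}. f r k)"
    unfolding hsum_def
  proof (rule sum.cong[OF refl])
    fix r assume r: "r \<in> {0..m}"
    have st: "{k. k \<in> {0..m} \<and> k \<le> r} = {..r}" using r by auto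
    have "c r * q ^ (m - r) * (p' + \<theta>*q) ^ r
       = c r * q ^ (m - r) * (\<Sum>k\<le>r. of_nat (r choose k) * p'^k * (\<theta>*q)^(r-k))"
      by (simp add: binomial_ring)
    also have "\<dots> = (\<Sum>k\<le>r. f r k)"
      unfolding sum_distrib_left
    proof (rule sum.cong[OF refl])
      fix k assume k: "k \<in> {..r}"
      have "q ^ (m - r) * q ^ (r - k) = q ^ (m - k)"
        using k r by (simp flip: power_add)
      then show "c r * q ^ (m - r) * (of_nat (r choose k) * p'^k * (\<theta>*q)^(r-k)) = f r k"
        unfolding f_def power_mult_distrib
        by (simp only: mult_ac flip: \<open>q ^ (m - r) * q ^ (r - k) = q ^ (m - k)\<close>)
    qed
    finally show "c r * q ^ (m - r) * (p' + \<theta>*q) ^ r = (\<Sum>k\<in>{k. k \<in> {0..m} \<and> k \<le> r}. f r k)"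
      using st by simp
  qed
  also have "\<dots> = (\<Sum>k\<in>{0..m}. \<Sum>r\<in>{r. r \<in> {0..m} \<and> k \<le> r}. f r k)"
    by (rule sum.swap_restrict) auto
  also have "\<dots> = hsum (\<lambda>k. if k \<le> m then (\<Sum>r = k..m. of_nat (r choose k) * c r * \<theta> ^ (r - k)) else 0) m q p'"
    unfolding hsum_def
  proof (rule sum.cong[OF refl])
    fix k assume k: "k \<in> {0..m}"
    have st: "{r. r \<in> {0..m} \<and> k \<le> r} = {k..m}" using k by auto
    show "(\<Sum>r\<in>{r. r \<in> {0..m} \<and> k \<le> r}. f r k) =
      (if k \<le> m then \<Sum>r = k..m. of_nat (r choose k) * c r * \<theta> ^ (r - k) else 0) * q ^ (m - k) * p' ^ k"
      using k unfolding st f_def by (simp add: sum_distrib_right)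
  qed
  finally show ?thesis .
qed



definition Pr where
  "Pr a b \<alpha> \<beta> m E g c \<longleftrightarrow> (\<forall>r>m. c r = 0) \<and>
     (\<forall>x y :: complex. (\<beta>*a - \<alpha>*b) ^ m * g x y =
        E x y * (\<Sum>r = 0..m. c r * (\<alpha>*x^2 + \<beta>*x*y + \<alpha>*y^2) ^ (m - r)
                                             * (a*x^2 + b*x*y + a*y^2) ^ r))"

lemma Pr_uniq:
  assumes D: "\<beta>*a - \<alpha>*b \<noteq> 0"
    and Enz: "\<And>x y. x + y \<noteq> 0 \<Longrightarrow> x - y \<noteq> 0 \<Longrightarrow> E x y \<noteq> (0::complex)"
    and c1: "Pr a b \<alpha> \<beta> m E g c1" and c2: "Pr a b \<alpha> \<beta> m E g c2"
  shows "c1 = c2"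
proof -
  have "(\<lambda>r. 1 * c1 r + (-1) * c2 r) = (\<lambda>_. 0)"
  proof (rule uniq0[OF D])
    show "\<forall>r>m. 1 * c1 r + - 1 * c2 r = 0" using c1 c2 unfolding Pr_def by simp
    show "\<forall>x y. x + y \<noteq> 0 \<longrightarrow> x - y \<noteq> 0 \<longrightarrow>
      hsum (\<lambda>r. 1 * c1 r + - 1 * c2 r) m (\<alpha> * x\<^sup>2 + \<beta> * x * y + \<alpha> * y\<^sup>2) (a * x\<^sup>2 + b * x * y + a * y\<^sup>2) = 0"
    proof (intro allI impI)
      fix x y :: complex assume h: "x + y \<noteq> 0" "x - y \<noteq> 0"
      have "E x y * hsum c1 m (\<alpha> * x\<^sup>2 + \<beta> * x * y + \<alpha> * y\<^sup>2) (a * x\<^sup>2 + b * x * y + a * y\<^sup>2)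
          = E x y * hsum c2 m (\<alpha> * x\<^sup>2 + \<beta> * x * y + \<alpha> * y\<^sup>2) (a * x\<^sup>2 + b * x * y + a * y\<^sup>2)"
      proof -
        have e1: "(\<beta>*a - \<alpha>*b)^m * g x y = E x y * hsum c1 m (\<alpha> * x\<^sup>2 + \<beta> * x * y + \<alpha> * y\<^sup>2) (a * x\<^sup>2 + b * x * y + a * y\<^sup>2)"
          using c1 unfolding Pr_def hsum_def by blast
        have e2: "(\<beta>*a - \<alpha>*b)^m * g x y = E x y * hsum c2 m (\<alpha> * x\<^sup>2 + \<beta> * x * y + \<alpha> * y\<^sup>2) (a * x\<^sup>2 + b * x * y + a * y\<^sup>2)"
          using c2 unfolding Pr_def hsum_def by blast
        show ?thesis by (rule trans[OF e1[symmetric] e2])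
      qed
      then have "hsum c1 m (\<alpha> * x\<^sup>2 + \<beta> * x * y + \<alpha> * y\<^sup>2) (a * x\<^sup>2 + b * x * y + a * y\<^sup>2)
          = hsum c2 m (\<alpha> * x\<^sup>2 + \<beta> * x * y + \<alpha> * y\<^sup>2) (a * x\<^sup>2 + b * x * y + a * y\<^sup>2)"
        using Enz[OF h] by simp
      then show "hsum (\<lambda>r. 1 * c1 r + - 1 * c2 r) m (\<alpha> * x\<^sup>2 + \<beta> * x * y + \<alpha> * y\<^sup>2) (a * x\<^sup>2 + b * x * y + a * y\<^sup>2) = 0"
        by (simp only: hsum_lin) simp
    qed
  qed
  then show ?thesis
  proof -
    assume h: "(\<lambda>r. 1 * c1 r + (-1) * c2 r) = (\<lambda>_. 0)"
    show ?thesis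
    proof (rule ext)
      fix r show "c1 r = c2 r" using fun_cong[OF h, of r] by simp
    qed
  qed
qed



lemma generic:
  fixes E g G :: "complex \<Rightarrow> complex \<Rightarrow> complex"
  assumes D: "\<beta>*a - \<alpha>*b \<noteq> 0"
    and Enz: "\<And>x y. x + y \<noteq> 0 \<Longrightarrow> x - y \<noteq> 0 \<Longrightarrow> E x y \<noteq> 0"
    and gG: "\<And>x y. g x y = E x y * G x y"
    and repG: "\<And>a b. rep a b \<alpha> \<beta> m (\<lambda>x y. (\<beta>*a - \<alpha>*b)^m * G x y)"
    and k: "k \<le> m"
  shows "(\<Sum>r = k..m. of_nat (r choose k) * (THE c. Pr a b \<alpha> \<beta> m E g c) r * \<theta> ^ (r - k))
       = (THE c. Pr (a - \<alpha>*\<theta>) (b - \<beta>*\<theta>) \<alpha> \<beta> m E g c) k"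
proof -
  obtain c0 where c0: "\<forall>r>m. c0 r = 0"
    "\<forall>x y. (\<beta>*a - \<alpha>*b)^m * G x y = hsum c0 m (\<alpha>*x^2 + \<beta>*x*y + \<alpha>*y^2) (a*x^2 + b*x*y + a*y^2)"
    using repG[of a b] unfolding rep_def by blast
  have P0: "Pr a b \<alpha> \<beta> m E g c0"
    unfolding Pr_def
  proof (intro conjI allI)
    fix r show "m < r \<longrightarrow> c0 r = 0" using c0 by simp
  next
    fix x y :: complex
    have "(\<beta>*a - \<alpha>*b)^m * g x y = E x y * ((\<beta>*a - \<alpha>*b)^m * G x y)"
      unfolding gG by (simp only: mult_ac)
    also have "\<dots> = E x y * hsum c0 m (\<alpha>*x^2 + \<beta>*x*y + \<alpha>*y^2) (a*x^2 + b*x*y + a*y^2)"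
      using c0 by simp
    finally show "(\<beta>*a - \<alpha>*b)^m * g x y = E x y * (\<Sum>r = 0..m. c0 r * (\<alpha>*x^2 + \<beta>*x*y + \<alpha>*y^2) ^ (m - r)
           * (a*x^2 + b*x*y + a*y^2) ^ r)" unfolding hsum_def .
  qed
  have T0: "(THE c. Pr a b \<alpha> \<beta> m E g c) = c0"
  proof (rule the_equality)
    show "Pr a b \<alpha> \<beta> m E g c0" by (rule P0)
  next
    fix c assume "Pr a b \<alpha> \<beta> m E g c"
    then show "c = c0" using Pr_uniq[OF D Enz _ P0] by blast
  qed
  define c' where "c' k = (if k \<le> m then (\<Sum>r = k..m. of_nat (r choose k) * c0 r * \<theta> ^ (r - k)) else 0)" for k
  have D': "\<beta>*(a - \<alpha>*\<theta>) - \<alpha>*(b - \<beta>*\<theta>) = \<beta>*a - \<alpha>*b" by (simp add: algebra_simps)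
  have P1: "Pr (a - \<alpha>*\<theta>) (b - \<beta>*\<theta>) \<alpha> \<beta> m E g c'"
    unfolding Pr_def
  proof (intro conjI allI)
    fix r show "m < r \<longrightarrow> c' r = 0" unfolding c'_def by simp
  next
    fix x y :: complex
    have PP: "a*x^2 + b*x*y + a*y^2 = ((a - \<alpha>*\<theta>)*x^2 + (b - \<beta>*\<theta>)*x*y + (a - \<alpha>*\<theta>)*y^2)
       + \<theta> * (\<alpha>*x^2 + \<beta>*x*y + \<alpha>*y^2)" by (simp add: algebra_simps)
    have "(\<beta>*(a - \<alpha>*\<theta>) - \<alpha>*(b - \<beta>*\<theta>))^m * g x y = E x y * ((\<beta>*a - \<alpha>*b)^m * G x y)"
      unfolding D' gG by (simp only: mult_ac)
    also have "\<dots> = E x y * hsum c0 m (\<alpha>*x^2 + \<beta>*x*y + \<alpha>*y^2) (a*x^2 + b*x*y + a*y^2)"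
      using c0 by simp
    also have "\<dots> = E x y * hsum c' m (\<alpha>*x^2 + \<beta>*x*y + \<alpha>*y^2)
        ((a - \<alpha>*\<theta>)*x^2 + (b - \<beta>*\<theta>)*x*y + (a - \<alpha>*\<theta>)*y^2)"
      unfolding c'_def by (subst PP, rule arg_cong[where f="\<lambda>z. E x y * z"], rule hsum_shift)
    finally show "(\<beta>*(a - \<alpha>*\<theta>) - \<alpha>*(b - \<beta>*\<theta>))^m * g x y =
        E x y * (\<Sum>r = 0..m. c' r * (\<alpha>*x^2 + \<beta>*x*y + \<alpha>*y^2) ^ (m - r)
           * ((a - \<alpha>*\<theta>)*x^2 + (b - \<beta>*\<theta>)*x*y + (a - \<alpha>*\<theta>)*y^2) ^ r)"
      unfolding hsum_def .
  qed
  have DD': "\<beta>*(a - \<alpha>*\<theta>) - \<alpha>*(b - \<beta>*\<theta>) \<noteq> 0" using D D' by simp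
  have T1: "(THE c. Pr (a - \<alpha>*\<theta>) (b - \<beta>*\<theta>) \<alpha> \<beta> m E g c) = c'"
  proof (rule the_equality)
    show "Pr (a - \<alpha>*\<theta>) (b - \<beta>*\<theta>) \<alpha> \<beta> m E g c'" by (rule P1)
  next
    fix c assume "Pr (a - \<alpha>*\<theta>) (b - \<beta>*\<theta>) \<alpha> \<beta> m E g c"
    then show "c = c'" using Pr_uniq[OF DD' Enz _ P1] by blast
  qed
  show ?thesis unfolding T0 T1 c'_def using k by simp
qed



lemma Psi_Pr: "Psi a b \<alpha> \<beta> n = (THE c. Pr a b \<alpha> \<beta> (n div 2) (\<lambda>x y. (x+y)^delta n) (\<lambda>x y. x^n+y^n) c)"
  unfolding Psi_def Pr_def by simp

lemma Phi_Pr: "Phi a b \<alpha> \<beta> n = (THE c. Pr a b \<alpha> \<beta> ((n - 1) div 2) (\<lambda>x y. (x - y) * (x+y)^delta (n - 1)) (\<lambda>x y. x^n-y^n) c)"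
  unfolding Phi_def Pr_def by simp

lemma part1:
  fixes a b \<alpha> \<beta> \<theta> :: complex and n k :: nat
  assumes D: "\<beta>*a - \<alpha>*b \<noteq> 0" and k: "k \<le> n div 2"
  shows "(\<Sum>r = k..n div 2. of_nat (r choose k) * Psi a b \<alpha> \<beta> n r * \<theta> ^ (r - k))
              = Psi (a - \<alpha>*\<theta>) (b - \<beta>*\<theta>) \<alpha> \<beta> n k"
proof (cases "even n")
  case True
  then have dn: "delta n = 0" and nn: "n = 2 * (n div 2)" by (auto simp: delta_def)
  show ?thesis unfolding Psi_Pr
  proof (rule generic[OF D _ _ _ k, where G = "\<lambda>x y. Grec 2 1 0 x y (n div 2)"])
    show "(x + y) ^ delta n \<noteq> 0" for x y :: complex using dn by simp
    show "x ^ n + y ^ n = (x + y) ^ delta n * Grec 2 1 0 x y (n div 2)" for x y :: complex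
      using G1[of x "n div 2" y] nn dn by simp
    show "rep a b \<alpha> \<beta> (n div 2) (\<lambda>x y. (\<beta> * a - \<alpha> * b) ^ (n div 2) * Grec 2 1 0 x y (n div 2))" for a b
      by (rule rep_Grec)
  qed
next
  case False
  then have dn: "delta n = 1" and nn: "n = 2 * (n div 2) + 1" by (auto simp: delta_def)
  show ?thesis unfolding Psi_Pr
  proof (rule generic[OF D _ _ _ k, where G = "\<lambda>x y. Grec 1 1 (-1) x y (n div 2)"])
    show "x + y \<noteq> 0 \<Longrightarrow> (x + y) ^ delta n \<noteq> 0" for x y :: complex using dn by simp
    show "x ^ n + y ^ n = (x + y) ^ delta n * Grec 1 1 (-1) x y (n div 2)" for x y :: complex
    proof -
      have e: "x^n + y^n = x^(2*(n div 2)+1) + y^(2*(n div 2)+1)"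
        by (rule arg_cong2[where f="\<lambda>i j. x^i + y^j"]; rule nn)
      show ?thesis unfolding e G2 dn by simp
    qed
    show "rep a b \<alpha> \<beta> (n div 2) (\<lambda>x y. (\<beta> * a - \<alpha> * b) ^ (n div 2) * Grec 1 1 (-1) x y (n div 2))" for a b
      by (rule rep_Grec)
  qed
qed

lemma part2:
  fixes a b \<alpha> \<beta> \<theta> :: complex and n k :: nat
  assumes D: "\<beta>*a - \<alpha>*b \<noteq> 0" and n: "n \<ge> 1" and k: "k \<le> (n - 1) div 2"
  shows "(\<Sum>r = k..(n - 1) div 2. of_nat (r choose k) * Phi a b \<alpha> \<beta> n r * \<theta> ^ (r - k))
              = Phi (a - \<alpha>*\<theta>) (b - \<beta>*\<theta>) \<alpha> \<beta> n k"
proof (cases "odd n")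
  case True
  then have dn: "delta (n - 1) = 0" and nn: "n = 2 * ((n - 1) div 2) + 1" using n by (auto simp: delta_def)
  show ?thesis unfolding Phi_Pr
  proof (rule generic[OF D _ _ _ k, where G = "\<lambda>x y. Grec 1 1 1 x y ((n - 1) div 2)"])
    show "x - y \<noteq> 0 \<Longrightarrow> (x - y) * (x + y) ^ delta (n - 1) \<noteq> 0" for x y :: complex using dn by simp
    show "x ^ n - y ^ n = (x - y) * (x + y) ^ delta (n - 1) * Grec 1 1 1 x y ((n - 1) div 2)" for x y :: complex
    proof -
      have e: "x^n - y^n = x^(2*((n - 1) div 2)+1) - y^(2*((n - 1) div 2)+1)"
        by (rule arg_cong2[where f="\<lambda>i j. x^i - y^j"]; rule nn)
      show ?thesis unfolding e G3 dn by simp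
    qed
    show "rep a b \<alpha> \<beta> ((n - 1) div 2) (\<lambda>x y. (\<beta> * a - \<alpha> * b) ^ ((n - 1) div 2) * Grec 1 1 1 x y ((n - 1) div 2))" for a b
      by (rule rep_Grec)
  qed
next
  case False
  then have dn: "delta (n - 1) = 1" and nn: "n = 2 * ((n - 1) div 2) + 2" using n by (auto simp: delta_def)
  show ?thesis unfolding Phi_Pr
  proof (rule generic[OF D _ _ _ k, where G = "\<lambda>x y. Grec 1 1 0 x y ((n - 1) div 2)"])
    show "x + y \<noteq> 0 \<Longrightarrow> x - y \<noteq> 0 \<Longrightarrow> (x - y) * (x + y) ^ delta (n - 1) \<noteq> 0" for x y :: complex using dn by simp
    show "x ^ n - y ^ n = (x - y) * (x + y) ^ delta (n - 1) * Grec 1 1 0 x y ((n - 1) div 2)" for x y :: complex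
    proof -
      have e: "x^n - y^n = x^(2*((n - 1) div 2)+2) - y^(2*((n - 1) div 2)+2)"
        by (rule arg_cong2[where f="\<lambda>i j. x^i - y^j"]; rule nn)
      show ?thesis unfolding e G4 dn by simp
    qed
    show "rep a b \<alpha> \<beta> ((n - 1) div 2) (\<lambda>x y. (\<beta> * a - \<alpha> * b) ^ ((n - 1) div 2) * Grec 1 1 0 x y ((n - 1) div 2))" for a b
      by (rule rep_Grec)
  qed
qed

theorem theorem10p5:
  fixes a b \<alpha> \<beta> \<theta> :: complex and n k :: nat
  assumes "\<beta>*a - \<alpha>*b \<noteq> 0" and "n \<ge> 1"
  shows "(k \<le> n div 2 \<longrightarrow>
            (\<Sum>r = k..n div 2. of_nat (r choose k) * Psi a b \<alpha> \<beta> n r * \<theta> ^ (r - k))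
              = Psi (a - \<alpha>*\<theta>) (b - \<beta>*\<theta>) \<alpha> \<beta> n k)
       \<and> (k \<le> (n - 1) div 2 \<longrightarrow>
            (\<Sum>r = k..(n - 1) div 2. of_nat (r choose k) * Phi a b \<alpha> \<beta> n r * \<theta> ^ (r - k))
              = Phi (a - \<alpha>*\<theta>) (b - \<beta>*\<theta>) \<alpha> \<beta> n k)"
  using part1[OF assms(1)] part2[OF assms] by blast

end
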